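(* Let $m\ge 2$ and let $(v_1,\dots,v_k)$ and $(w_1,\dots,w_l)$ be mutually unbiased equiangular tight frames for $\mathbb{R}^m$, with $V\in\mathbb{R}^{m\times k}$ and $W\in\mathbb{R}^{m\times l}$ the matrices with these vectors as columns. For integers $n\ge m$ put $\delta_{m,n}:=\frac{m}{n}\left(1+\sqrt{\frac{(n-1)(n-m)}{m}}\right)$, and let $$\gamma_{m,k,l}=\frac{m-\delta_{m,k}\delta_{m,l}}{2\sqrt m-\delta_{m,k}-\delta_{m,l}},$$ and let $\theta\in[0,\pi/2]$ be given by $\cos(2\theta)=\frac{\delta_{m,k}-\delta_{m,l}}{2\sqrt m-\delta_{m,k}-\delta_{m,l}}$. Define, in block form, $$t_\theta:=\begin{bmatrix}\frac{\cos\theta}{\sqrt k}\mathbb{1}_k\\ \frac{\sin\theta}{\sqrt l}\mathbb{1}_l\end{bmatrix}\in\mathbb{R}^{k+l},\qquad U_\theta:=\begin{bmatrix}\cos\theta\sqrt{\tfrac{m}{k}}\,V & \sin\theta\sqrt{\tfrac{m}{l}}\,W\end{bmatrix}\in\mathbb{R}^{m\times(k+l)},$$ and $T_\theta:=\mathrm{diag}[t_\theta]$. Then $$|U_\theta^\top U_\theta|\,t_\theta=\gamma_{m,k,l}\,t_\theta\qquad\text{and}\qquad T_\theta\,\mathrm{sgn}(U_\theta^\top U_\theta)\,T_\theta\,U_\theta^\top=\frac{\gamma_{m,k,l}}{m}\,U_\theta^\top.$$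
   Context: $\mathbb{1}_n$ denotes the all-ones vector in $\mathbb{R}^n$; $|A|$ and $\mathrm{sgn}(A)$ denote the entrywise absolute value and entrywise sign of a matrix $A$. A system of unit vectors $(v_1,\dots,v_n)$ in $\mathbb{R}^m$ is an equiangular tight frame if $|\langle v_i,v_j\rangle|$ is the same constant for all $i\ne j$ and $VV^\top=\frac{n}{m}\mathrm{I}_m$, where $V$ has columns $v_i$. Two equiangular tight frames $(v_1,\dots,v_k)$, $(w_1,\dots,w_l)$ for $\mathbb{R}^m$ are mutually unbiased if $|\langle v_i,w_j\rangle|$ is the same constant for all $i,j$. *)

theory Defs
  imports "HOL-Analysis.Analysis"
begin

text \<open>Matrices are Cartesian: a real m x k matrix is of type real^'k^'m
  (rows indexed by 'm, columns by 'k). The frame vectors are the columns.\<close>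

definition is_ETF :: "real^'k^'m \<Rightarrow> bool" where
  "is_ETF V \<longleftrightarrow>
     (\<forall>j. norm (column j V) = 1) \<and>
     (\<exists>c. \<forall>i j. i \<noteq> j \<longrightarrow> \<bar>column i V \<bullet> column j V\<bar> = c) \<and>
     V ** transpose V = (real CARD('k) / real CARD('m)) *\<^sub>R mat 1"

definition mutually_unbiased :: "real^'k^'m \<Rightarrow> real^'l^'m \<Rightarrow> bool" where
  "mutually_unbiased V W \<longleftrightarrow>
     (\<exists>c. \<forall>i j. \<bar>column i V \<bullet> column j W\<bar> = c)"

definition delta :: "nat \<Rightarrow> nat \<Rightarrow> real" where
  "delta m n = (real m / real n) *
     (1 + sqrt ((real n - 1) * (real n - real m) / real m))"

definition gamma :: "nat \<Rightarrow> nat \<Rightarrow> nat \<Rightarrow> real" where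
  "gamma m k l = (real m - delta m k * delta m l) /
     (2 * sqrt (real m) - delta m k - delta m l)"

definition mat_abs :: "real^'n^'m \<Rightarrow> real^'n^'m" where
  "mat_abs A = (\<chi> i j. \<bar>A $ i $ j\<bar>)"

definition mat_sgn :: "real^'n^'m \<Rightarrow> real^'n^'m" where
  "mat_sgn A = (\<chi> i j. sgn (A $ i $ j))"

definition diag_mat :: "real^'n \<Rightarrow> real^'n^'n" where
  "diag_mat t = (\<chi> i j. if i = j then t $ i else 0)"

definition t_theta :: "real \<Rightarrow> real^('k::finite + 'l::finite)" where
  "t_theta \<theta> = (\<chi> x. case x of
       Inl _ \<Rightarrow> cos \<theta> / sqrt (real CARD('k))
     | Inr _ \<Rightarrow> sin \<theta> / sqrt (real CARD('l)))"

definition U_theta :: "real \<Rightarrow> real^('k::finite)^('m::finite) \<Rightarrow> real^'l^'m \<Rightarrow> real^('k + 'l)^'m" where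
  "U_theta \<theta> V W = (\<chi> i x. case x of
       Inl j \<Rightarrow> cos \<theta> * sqrt (real CARD('m) / real CARD('k)) * V $ i $ j
     | Inr j \<Rightarrow> sin \<theta> * sqrt (real CARD('m) / real CARD('l)) * W $ i $ j)"

end

theory Submission
  imports Defs
begin


lemma sum_UNIV_Plus:
  "(\<Sum>x\<in>(UNIV::('a::finite + 'b::finite) set). f x) = (\<Sum>p\<in>UNIV. f (Inl p)) + (\<Sum>q\<in>UNIV. f (Inr q))"
  using sum.Plus[of "UNIV::'a set" "UNIV::'b set" f] by (simp add: o_def)

lemma frame_repr:
  fixes V :: "real^'k^'m"
  assumes "is_ETF V"
  shows "(\<Sum>q\<in>UNIV. (x \<bullet> column q V) * V $ i $ q) = real CARD('k) / real CARD('m) * x $ i"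
proof -
  have F: "V ** transpose V = (real CARD('k) / real CARD('m)) *\<^sub>R mat 1"
    using assms unfolding is_ETF_def by blast
  have E: "(\<Sum>q\<in>UNIV. V $ r $ q * V $ i $ q) = (if r = i then real CARD('k) / real CARD('m) else 0)" for r
  proof -
    have "(\<Sum>q\<in>UNIV. V $ r $ q * V $ i $ q) = (V ** transpose V) $ r $ i"
      by (simp add: matrix_matrix_mult_def transpose_def)
    also have "\<dots> = (if r = i then real CARD('k) / real CARD('m) else 0)"
      by (simp add: F mat_def)
    finally show ?thesis .
  qed
  have "(\<Sum>q\<in>UNIV. (x \<bullet> column q V) * V $ i $ q) = (\<Sum>q\<in>UNIV. \<Sum>r\<in>UNIV. x $ r * (V $ r $ q * V $ i $ q))"
    by (simp add: inner_vec_def column_def sum_distrib_right mult.assoc)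
  also have "\<dots> = (\<Sum>r\<in>UNIV. x $ r * (\<Sum>q\<in>UNIV. V $ r $ q * V $ i $ q))"
    by (subst sum.swap) (simp add: sum_distrib_left)
  also have "\<dots> = real CARD('k) / real CARD('m) * x $ i"
    by (simp add: E if_distrib cong: if_cong)
  finally show ?thesis .
qed

lemma frame_sq:
  fixes V :: "real^'k^'m"
  assumes "is_ETF V"
  shows "(\<Sum>q\<in>UNIV. (x \<bullet> column q V)^2) = real CARD('k) / real CARD('m) * (x \<bullet> x)"
proof -
  have "(\<Sum>q\<in>UNIV. (x \<bullet> column q V)^2) = (\<Sum>q\<in>UNIV. \<Sum>i\<in>UNIV. (x \<bullet> column q V) * (x $ i * V $ i $ q))"
    by (simp add: power2_eq_square inner_vec_def column_def sum_distrib_left)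
  also have "\<dots> = (\<Sum>i\<in>UNIV. x $ i * (\<Sum>q\<in>UNIV. (x \<bullet> column q V) * V $ i $ q))"
    by (subst sum.swap) (simp add: sum_distrib_left mult.left_commute)
  also have "\<dots> = (\<Sum>i\<in>UNIV. x $ i * (real CARD('k) / real CARD('m) * x $ i))"
    using frame_repr[OF assms] by presburger
  also have "\<dots> = real CARD('k) / real CARD('m) * (x \<bullet> x)"
    by (simp add: inner_vec_def sum_distrib_left mult.left_commute)
  finally show ?thesis .
qed

lemma etf_const:
  fixes V :: "real^'k^'m"
  assumes "is_ETF V" "CARD('m) \<ge> 2"
  shows "\<exists>c\<ge>0. (\<forall>i j. i \<noteq> j \<longrightarrow> \<bar>column i V \<bullet> column j V\<bar> = c)
     \<and> (real CARD('k) - 1) * c^2 = real CARD('k) / real CARD('m) - 1 \<and> CARD('k) \<ge> 2"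
proof -
  obtain c where c: "\<forall>i j. i \<noteq> j \<longrightarrow> \<bar>column i V \<bullet> column j V\<bar> = c"
    using assms(1) unfolding is_ETF_def by blast
  have n1: "column j V \<bullet> column j V = 1" for j
    using assms(1) unfolding is_ETF_def by (simp add: norm_eq_1)
  define p :: 'k where "p = undefined"
  have "(\<Sum>q\<in>UNIV. (column p V \<bullet> column q V)^2) = real CARD('k) / real CARD('m)"
    using frame_sq[OF assms(1), of "column p V"] n1 by simp
  moreover have "(\<Sum>q\<in>UNIV. (column p V \<bullet> column q V)^2)
      = (column p V \<bullet> column p V)^2 + (\<Sum>q\<in>UNIV-{p}. (column p V \<bullet> column q V)^2)"
    by (rule sum.remove) auto
  moreover have "(\<Sum>q\<in>UNIV-{p}. (column p V \<bullet> column q V)^2) = (\<Sum>q\<in>UNIV-{p}. c^2)"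
  proof (rule sum.cong)
    fix q assume "q \<in> UNIV - {p}"
    then have "\<bar>column p V \<bullet> column q V\<bar> = c" using c by auto
    then show "(column p V \<bullet> column q V)^2 = c^2" by (metis power2_abs)
  qed simp
  moreover have "(\<Sum>q\<in>UNIV-{p}. c^2) = (real CARD('k) - 1) * c^2"
    by (simp add: card_Diff_singleton of_nat_diff)
  ultimately have eq: "1 + (real CARD('k) - 1) * c^2 = real CARD('k) / real CARD('m)"
    using n1 by simp
  have m2: "real CARD('m) \<ge> 2" using assms(2) by simp
  have k2: "CARD('k) \<ge> 2"
  proof (rule ccontr)
    assume "\<not> ?thesis"
    then have "CARD('k) = 1" using zero_less_card_finite[where 'a='k] by linarith
    with eq have "1 = 1 / real CARD('m)" by simp
    with m2 show False by (simp add: field_simps)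
  qed
  have "\<exists>q::'k. q \<noteq> p"
  proof (rule ccontr)
    assume "\<not> ?thesis"
    then have U: "(UNIV::'k set) = {p}" by auto
    have "CARD('k) = card {p}" by (simp only: U)
    then have "CARD('k) = 1" by simp
    with k2 show False by simp
  qed
  then obtain q where "q \<noteq> p" by blast
  with c have "c \<ge> 0" by (metis abs_ge_zero)
  with c eq k2 show ?thesis by (intro exI[of _ c]) (auto simp: algebra_simps)
qed

lemma etf_sums:
  fixes V :: "real^'k^'m"
  assumes "is_ETF V" "CARD('m) \<ge> 2"
  shows "real CARD('k) \<ge> real CARD('m)
    \<and> (\<forall>p. (\<Sum>q\<in>UNIV. \<bar>column p V \<bullet> column q V\<bar>) = real CARD('k) / real CARD('m) * delta CARD('m) CARD('k))
    \<and> (\<forall>p i. (\<Sum>q\<in>UNIV. sgn (column p V \<bullet> column q V) * V $ i $ q) = real CARD('k) / real CARD('m) * delta CARD('m) CARD('k) * V $ i $ p)"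
proof -
  obtain c where c0: "c \<ge> 0" and c: "\<forall>i j. i \<noteq> j \<longrightarrow> \<bar>column i V \<bullet> column j V\<bar> = c"
    and eq: "(real CARD('k) - 1) * c^2 = real CARD('k) / real CARD('m) - 1" and k2: "CARD('k) \<ge> 2"
    using etf_const[OF assms] by blast
  have n1: "column j V \<bullet> column j V = 1" for j
    using assms(1) unfolding is_ETF_def by (simp add: norm_eq_1)
  define k where "k = real CARD('k)"
  define m where "m = real CARD('m)"
  have m2: "m \<ge> 2" using assms(2) unfolding m_def by simp
  have k2': "k \<ge> 2" using k2 unfolding k_def by simp
  have eq': "(k - 1) * c^2 = k/m - 1" using eq unfolding k_def m_def .
  have kge: "k \<ge> m"
  proof -
    have "(k - 1) * c^2 \<ge> 0" using k2' by simp
    then have "k/m - 1 \<ge> 0" using eq' by linarith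
    then show ?thesis using m2 by (simp add: field_simps)
  qed
  have sq: "sqrt ((k - 1) * (k - m) / m) = (k - 1) * c"
  proof (rule real_sqrt_unique)
    have "((k - 1) * c)^2 = (k - 1) * ((k - 1) * c^2)" by (simp add: power2_eq_square)
    also have "(k - 1) * c^2 = (k - m) / m" using eq' m2 by (simp add: field_simps)
    also have "(k - 1) * ((k - m) / m) = (k - 1) * (k - m) / m" by simp
    finally show "((k - 1) * c)^2 = (k - 1) * (k - m) / m" .
    show "0 \<le> (k - 1) * c" using k2' c0 by simp
  qed
  have e: "k / m * delta CARD('m) CARD('k) = 1 + (k - 1) * c"
    unfolding delta_def k_def[symmetric] m_def[symmetric] sq using m2 k2' by (simp add: field_simps)
  have absum: "(\<Sum>q\<in>UNIV. \<bar>column p V \<bullet> column q V\<bar>) = 1 + (k - 1) * c" for p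
  proof -
    have "(\<Sum>q\<in>UNIV. \<bar>column p V \<bullet> column q V\<bar>)
      = \<bar>column p V \<bullet> column p V\<bar> + (\<Sum>q\<in>UNIV-{p}. \<bar>column p V \<bullet> column q V\<bar>)"
      by (rule sum.remove) auto
    also have "(\<Sum>q\<in>UNIV-{p}. \<bar>column p V \<bullet> column q V\<bar>) = (\<Sum>q\<in>UNIV-{p}. c)"
      by (rule sum.cong) (use c in auto)
    also have "\<dots> = (k - 1) * c" by (simp add: card_Diff_singleton of_nat_diff k_def)
    finally show ?thesis using n1 by simp
  qed
  have sgnsum: "(\<Sum>q\<in>UNIV. sgn (column p V \<bullet> column q V) * V $ i $ q) = (1 + (k - 1) * c) * V $ i $ p" for p i
  proof -
    have split: "(\<Sum>q\<in>UNIV. f q) = f p + (\<Sum>q\<in>UNIV-{p}. f q)" for f :: "'k \<Rightarrow> real"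
      by (rule sum.remove) auto
    have sc: "sgn (column p V \<bullet> column q V) * c = column p V \<bullet> column q V" if "q \<noteq> p" for q
      using c that by (metis sgn_mult_abs)
    have R: "(\<Sum>q\<in>UNIV. (column p V \<bullet> column q V) * V $ i $ q) = k / m * V $ i $ p"
      using frame_repr[OF assms(1), of "column p V" i] unfolding k_def m_def by (simp add: column_def)
    have R2: "(\<Sum>q\<in>UNIV-{p}. (column p V \<bullet> column q V) * V $ i $ q) = (k - 1) * c^2 * V $ i $ p"
    proof -
      have "(\<Sum>q\<in>UNIV-{p}. (column p V \<bullet> column q V) * V $ i $ q) = k / m * V $ i $ p - V $ i $ p"
        using R split[of "\<lambda>q. (column p V \<bullet> column q V) * V $ i $ q"] n1 by simp
      also have "\<dots> = (k / m - 1) * V $ i $ p" by (simp add: algebra_simps)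
      finally show ?thesis using eq' by simp
    qed
    show ?thesis
    proof (cases "c = 0")
      case True
      then have "(\<Sum>q\<in>UNIV-{p}. sgn (column p V \<bullet> column q V) * V $ i $ q) = 0"
        using c by (intro sum.neutral) auto
      then show ?thesis using split[of "\<lambda>q. sgn (column p V \<bullet> column q V) * V $ i $ q"] n1 True by simp
    next
      case False
      have "c * (\<Sum>q\<in>UNIV-{p}. sgn (column p V \<bullet> column q V) * V $ i $ q)
          = (\<Sum>q\<in>UNIV-{p}. (column p V \<bullet> column q V) * V $ i $ q)"
        unfolding sum_distrib_left
      proof (rule sum.cong)
        fix q assume "q \<in> UNIV - {p}"
        then have h: "sgn (column p V \<bullet> column q V) * c = column p V \<bullet> column q V" by (intro sc) auto
        have "c * (sgn (column p V \<bullet> column q V) * V $ i $ q) = (sgn (column p V \<bullet> column q V) * c) * V $ i $ q"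
          by (simp only: mult_ac)
        also have "\<dots> = (column p V \<bullet> column q V) * V $ i $ q" by (simp only: h)
        finally show "c * (sgn (column p V \<bullet> column q V) * V $ i $ q) = (column p V \<bullet> column q V) * V $ i $ q" .
      qed simp
      then have "c * (\<Sum>q\<in>UNIV-{p}. sgn (column p V \<bullet> column q V) * V $ i $ q) = c * ((k - 1) * c * V $ i $ p)"
        using R2 by (simp add: power2_eq_square algebra_simps)
      then have "(\<Sum>q\<in>UNIV-{p}. sgn (column p V \<bullet> column q V) * V $ i $ q) = (k - 1) * c * V $ i $ p"
        using False by simp
      then show ?thesis using split[of "\<lambda>q. sgn (column p V \<bullet> column q V) * V $ i $ q"] n1 by (simp add: algebra_simps)
    qed
  qed
  show ?thesis
  proof (intro conjI allI)
    show "real CARD('k) \<ge> real CARD('m)" using kge unfolding k_def m_def .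
    fix p
    show "(\<Sum>q\<in>UNIV. \<bar>column p V \<bullet> column q V\<bar>) = real CARD('k) / real CARD('m) * delta CARD('m) CARD('k)"
      unfolding k_def[symmetric] m_def[symmetric] e by (rule absum)
    fix i
    show "(\<Sum>q\<in>UNIV. sgn (column p V \<bullet> column q V) * V $ i $ q) = real CARD('k) / real CARD('m) * delta CARD('m) CARD('k) * V $ i $ p"
      unfolding k_def[symmetric] m_def[symmetric] e by (rule sgnsum)
  qed
qed



lemma mub_const:
  fixes V :: "real^'k^'m" and W :: "real^'l^'m"
  assumes "is_ETF V" "is_ETF W" "mutually_unbiased V W"
  shows "\<bar>column p V \<bullet> column q W\<bar> = 1 / sqrt (real CARD('m))"
proof -
  obtain c where c: "\<forall>i j. \<bar>column i V \<bullet> column j W\<bar> = c"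
    using assms(3) unfolding mutually_unbiased_def by blast
  have n1: "column p V \<bullet> column p V = 1"
    using assms(1) unfolding is_ETF_def by (simp add: norm_eq_1)
  have "(\<Sum>q\<in>UNIV. (column p V \<bullet> column q W)^2) = real CARD('l) / real CARD('m)"
    using frame_sq[OF assms(2), of "column p V"] n1 by simp
  moreover have "(\<Sum>q\<in>UNIV. (column p V \<bullet> column q W)^2) = (\<Sum>q\<in>(UNIV::'l set). c^2)"
    by (rule sum.cong) (use c in \<open>metis power2_abs\<close>)+
  ultimately have "real CARD('l) * c^2 = real CARD('l) / real CARD('m)" by simp
  then have "c^2 = 1 / real CARD('m)" by (simp add: field_simps)
  moreover have "c \<ge> 0" using c by (metis abs_ge_zero)
  ultimately have "c = sqrt (1 / real CARD('m))" by (metis real_sqrt_unique)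
  then show ?thesis using c by (simp add: real_sqrt_divide)
qed

lemma sgn_mub:
  fixes x :: real
  assumes "\<bar>x\<bar> = 1 / sqrt m" "m > 0"
  shows "sgn x = sqrt m * x"
proof -
  have "x = 1 / sqrt m \<or> x = - (1 / sqrt m)" using assms(1) by linarith
  then show ?thesis using assms(2) by auto
qed

lemma delta_lt:
  assumes "real n \<ge> real m" "m \<ge> 2"
  shows "delta m n < sqrt (real m)"
proof -
  define r where "r = sqrt (real m)"
  have r1: "r > 1" unfolding r_def using assms(2) by simp
  have rm: "real m = r^2" unfolding r_def by simp
  have nr: "real n \<ge> r^2" using assms(1) rm by simp
  moreover have "r^2 > 0" using r1 by simp
  ultimately have npos: "real n > 0" by linarith
  have "r^2 > r" using r1 by (simp add: power2_eq_square)
  then have "real n > r" using nr by linarith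
  then have "real n / r > 1" using r1 by simp
  then have y0: "real n / r - 1 > 0" by simp
  have "(real n - 1) * (real n - real m) / real m < (real n / r - 1)^2"
  proof -
    have "(real n / r - 1)^2 - (real n - 1) * (real n - real m) / real m = real n * (r - 1)^2 / r^2"
      unfolding rm using r1 by (simp add: field_simps power2_eq_square)
    moreover have "real n * (r - 1)^2 / r^2 > 0" using r1 npos by simp
    ultimately show ?thesis by linarith
  qed
  then have "sqrt ((real n - 1) * (real n - real m) / real m) < sqrt ((real n / r - 1)^2)"
    by (rule real_sqrt_less_mono)
  then have "sqrt ((real n - 1) * (real n - real m) / real m) < real n / r - 1"
    using y0 by simp
  then have "1 + sqrt ((real n - 1) * (real n - real m) / real m) < real n / r" by simp
  then have "real m / real n * (1 + sqrt ((real n - 1) * (real n - real m) / real m)) < real m / real n * (real n / r)"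
    using npos r1 rm by (intro mult_strict_left_mono) auto
  also have "\<dots> = r" using npos r1 rm by (simp add: field_simps power2_eq_square)
  finally show ?thesis unfolding delta_def r_def .
qed



lemma gram_entry: "(transpose A ** A) $ x $ y = (\<Sum>i\<in>UNIV. A$i$x * A$i$y)"
  by (simp add: matrix_matrix_mult_def transpose_def)

lemma U_Inl: "U_theta \<theta> V W $ i $ Inl p = cos \<theta> * sqrt (real CARD('m) / real CARD('k)) * ((V::real^'k^'m) $ i $ p)"
  by (simp add: U_theta_def)
lemma U_Inr: "U_theta \<theta> (V::real^'k^'m) W $ i $ Inr q = sin \<theta> * sqrt (real CARD('m) / real CARD('l)) * ((W::real^'l^'m) $ i $ q)"
  by (simp add: U_theta_def)
lemma t_Inl: "(t_theta \<theta> :: real^('k::finite + 'l::finite)) $ Inl p = cos \<theta> / sqrt (real CARD('k))"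
  by (simp add: t_theta_def)
lemma t_Inr: "(t_theta \<theta> :: real^('k::finite + 'l::finite)) $ Inr q = sin \<theta> / sqrt (real CARD('l))"
  by (simp add: t_theta_def)

lemma gram_LL: "(transpose (U_theta \<theta> V W) ** U_theta \<theta> V W) $ Inl p $ Inl q
   = (cos \<theta> * sqrt (real CARD('m) / real CARD('k)))^2 * (column p (V::real^'k^'m) \<bullet> column q V)"
  unfolding gram_entry U_Inl by (simp add: inner_vec_def column_def sum_distrib_left power2_eq_square mult_ac)
lemma gram_LR: "(transpose (U_theta \<theta> V W) ** U_theta \<theta> V W) $ Inl p $ Inr q
   = (cos \<theta> * sqrt (real CARD('m) / real CARD('k))) * (sin \<theta> * sqrt (real CARD('m) / real CARD('l))) * (column p (V::real^'k^'m) \<bullet> column q (W::real^'l^'m))"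
  unfolding gram_entry U_Inl U_Inr by (simp add: inner_vec_def column_def sum_distrib_left mult_ac)
lemma gram_RL: "(transpose (U_theta \<theta> V W) ** U_theta \<theta> V W) $ Inr q $ Inl p
   = (cos \<theta> * sqrt (real CARD('m) / real CARD('k))) * (sin \<theta> * sqrt (real CARD('m) / real CARD('l))) * (column p (V::real^'k^'m) \<bullet> column q (W::real^'l^'m))"
  unfolding gram_entry U_Inl U_Inr by (simp add: inner_vec_def column_def sum_distrib_left mult_ac)
lemma gram_RR: "(transpose (U_theta \<theta> V W) ** U_theta \<theta> V W) $ Inr p $ Inr q
   = (sin \<theta> * sqrt (real CARD('m) / real CARD('l)))^2 * (column p (W::real^'l^'m) \<bullet> column q W)"
  unfolding gram_entry U_Inr by (simp add: inner_vec_def column_def sum_distrib_left power2_eq_square mult_ac)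

lemma diag_left: "(diag_mat t ** A) $ x $ y = t$x * A$x$y"
  by (simp add: matrix_matrix_mult_def diag_mat_def if_distrib[of "\<lambda>z. z * _"] cong: if_cong)
lemma diag_right: "(A ** diag_mat t) $ x $ y = A$x$y * t$y"
  by (simp add: matrix_matrix_mult_def diag_mat_def if_distrib[of "\<lambda>z. _ * z"] cong: if_cong)

lemma sum_abs_factor: "(\<Sum>q\<in>A. \<bar>(s::real) * g q\<bar> * c0) = \<bar>s\<bar> * c0 * (\<Sum>q\<in>A. \<bar>g q\<bar>)"
  by (simp add: abs_mult sum_distrib_left mult_ac)
lemma sum_sgn_factor: "(s::real) > 0 \<Longrightarrow> (\<Sum>q\<in>A. tx * sgn (s * g q) * c0 * (u * v q)) = tx * c0 * u * (\<Sum>q\<in>A. sgn (g q) * v q)"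
  by (simp add: sgn_mult sum_distrib_left mult_ac)



lemma vec_eqI: "(\<And>i. x $ i = y $ i) \<Longrightarrow> x = y"
  by (simp add: vec_eq_iff)

theorem proposition1:
  fixes V :: "real^'k^'m" and W :: "real^'l^'m" and \<theta> :: real
  assumes "CARD('m) \<ge> 2"
    and "is_ETF V" and "is_ETF W"
    and "mutually_unbiased V W"
    and "0 \<le> \<theta>" and "\<theta> \<le> pi / 2"
    and "cos (2 * \<theta>) =
           (delta CARD('m) CARD('k) - delta CARD('m) CARD('l)) /
           (2 * sqrt (real CARD('m)) - delta CARD('m) CARD('k) - delta CARD('m) CARD('l))"
  shows "mat_abs (transpose (U_theta \<theta> V W) ** U_theta \<theta> V W) *v t_theta \<theta>
           = gamma CARD('m) CARD('k) CARD('l) *\<^sub>R (t_theta \<theta> :: real^('k + 'l))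
       \<and> diag_mat (t_theta \<theta>) ** mat_sgn (transpose (U_theta \<theta> V W) ** U_theta \<theta> V W)
           ** diag_mat (t_theta \<theta>) ** transpose (U_theta \<theta> V W)
           = (gamma CARD('m) CARD('k) CARD('l) / real CARD('m)) *\<^sub>R transpose (U_theta \<theta> V W)"
proof -
  define m where "m = real CARD('m)"
  define k where "k = real CARD('k)"
  define l where "l = real CARD('l)"
  define dk where "dk = delta CARD('m) CARD('k)"
  define dl where "dl = delta CARD('m) CARD('l)"
  define g where "g = gamma CARD('m) CARD('k) CARD('l)"
  define sm where "sm = sqrt m"
  define sk where "sk = sqrt k"
  define sl where "sl = sqrt l"
  define G where "G = transpose (U_theta \<theta> V W) ** U_theta \<theta> V W"
  define t where "t = (t_theta \<theta> :: real^('k + 'l))"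
  define a where "a = cos \<theta> * sqrt (m / k)"
  define b where "b = sin \<theta> * sqrt (m / l)"
  have m2: "m \<ge> 2" using assms(1) unfolding m_def by simp
  have kpos: "k > 0" unfolding k_def by simp
  have lpos: "l > 0" unfolding l_def by simp
  have smpos: "sm > 0" and sm2: "sm^2 = m" using m2 unfolding sm_def by auto
  have skpos: "sk > 0" and sk2: "sk^2 = k" using kpos unfolding sk_def by auto
  have slpos: "sl > 0" and sl2: "sl^2 = l" using lpos unfolding sl_def by auto
  have a_eq: "a = cos \<theta> * sm / sk" unfolding a_def sm_def sk_def by (simp add: real_sqrt_divide)
  have b_eq: "b = sin \<theta> * sm / sl" unfolding b_def sm_def sl_def by (simp add: real_sqrt_divide)
  note EV = etf_sums[OF assms(2,1)] and EW = etf_sums[OF assms(3,1)]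
  have kge: "k \<ge> m" and absV: "\<And>p. (\<Sum>q\<in>UNIV. \<bar>column p V \<bullet> column q V\<bar>) = k / m * dk"
    and sgnV: "\<And>p i. (\<Sum>q\<in>UNIV. sgn (column p V \<bullet> column q V) * V $ i $ q) = k / m * dk * V $ i $ p"
    using EV unfolding k_def m_def dk_def by auto
  have lge: "l \<ge> m" and absW: "\<And>p. (\<Sum>q\<in>UNIV. \<bar>column p W \<bullet> column q W\<bar>) = l / m * dl"
    and sgnW: "\<And>p i. (\<Sum>q\<in>UNIV. sgn (column p W \<bullet> column q W) * W $ i $ q) = l / m * dl * W $ i $ p"
    using EW unfolding l_def m_def dl_def by auto
  have mub: "\<And>p q. \<bar>column p V \<bullet> column q W\<bar> = 1 / sm"
    using mub_const[OF assms(2,3,4)] unfolding sm_def m_def by simp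
  have sgnX: "\<And>p q. sgn (column p V \<bullet> column q W) = sm * (column p V \<bullet> column q W)"
  proof -
    fix p q
    have "\<bar>column p V \<bullet> column q W\<bar> = 1 / sqrt m" using mub unfolding sm_def .
    moreover have "m > 0" using m2 by simp
    ultimately show "sgn (column p V \<bullet> column q W) = sm * (column p V \<bullet> column q W)"
      unfolding sm_def by (rule sgn_mub)
  qed
  have crossV: "\<And>q i. (\<Sum>p\<in>UNIV. sgn (column p V \<bullet> column q W) * V $ i $ p) = sm * (k / m) * W $ i $ q"
  proof -
    fix q i
    have "(\<Sum>p\<in>UNIV. sgn (column p V \<bullet> column q W) * V $ i $ p) = sm * (\<Sum>p\<in>UNIV. (column q W \<bullet> column p V) * V $ i $ p)"
      by (simp add: sgnX sum_distrib_left inner_commute mult_ac)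
    also have "\<dots> = sm * (k / m) * W $ i $ q"
      using frame_repr[OF assms(2), of "column q W" i] unfolding k_def m_def by (simp add: column_def)
    finally show "(\<Sum>p\<in>UNIV. sgn (column p V \<bullet> column q W) * V $ i $ p) = sm * (k / m) * W $ i $ q" .
  qed
  have crossW: "\<And>p i. (\<Sum>q\<in>UNIV. sgn (column p V \<bullet> column q W) * W $ i $ q) = sm * (l / m) * V $ i $ p"
  proof -
    fix p i
    have "(\<Sum>q\<in>UNIV. sgn (column p V \<bullet> column q W) * W $ i $ q) = sm * (\<Sum>q\<in>UNIV. (column p V \<bullet> column q W) * W $ i $ q)"
      by (simp add: sgnX sum_distrib_left mult_ac)
    also have "\<dots> = sm * (l / m) * V $ i $ p"
      using frame_repr[OF assms(3), of "column p V" i] unfolding l_def m_def by (simp add: column_def)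
    finally show "(\<Sum>q\<in>UNIV. sgn (column p V \<bullet> column q W) * W $ i $ q) = sm * (l / m) * V $ i $ p" .
  qed
  have dk_lt: "dk < sm" unfolding dk_def sm_def m_def
    using delta_lt[of "CARD('m)" "CARD('k)"] kge assms(1) unfolding k_def m_def by simp
  have dl_lt: "dl < sm" unfolding dl_def sm_def m_def
    using delta_lt[of "CARD('m)" "CARD('l)"] lge assms(1) unfolding l_def m_def by simp
  define D where "D = 2 * sm - dk - dl"
  have Dpos: "D > 0" unfolding D_def using dk_lt dl_lt by simp
  have c2: "cos (2 * \<theta>) = (dk - dl) / D" using assms(7) unfolding D_def dk_def dl_def sm_def m_def .
  have cos2: "(cos \<theta>)^2 = (sm - dl) / D"
  proof -
    have "2 * (cos \<theta>)^2 - 1 = (dk - dl) / D" using c2 by (simp add: cos_double_cos)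
    then show ?thesis using Dpos unfolding D_def by (simp add: field_simps)
  qed
  have sin2: "(sin \<theta>)^2 = (sm - dk) / D"
  proof -
    have "(sin \<theta>)^2 = 1 - (cos \<theta>)^2" by (simp add: sin_squared_eq)
    then show ?thesis using cos2 Dpos unfolding D_def by (simp add: field_simps)
  qed
  have cpos: "cos \<theta> > 0"
  proof -
    have "cos \<theta> \<ge> 0" using assms(5,6) by (intro cos_ge_zero) auto
    moreover have "(cos \<theta>)^2 > 0" using cos2 Dpos dl_lt by simp
    ultimately show ?thesis by (metis less_eq_real_def power_zero_numeral zero_less_power2)
  qed
  have spos: "sin \<theta> > 0"
  proof -
    have "sin \<theta> \<ge> 0" using assms(5,6) by (intro sin_ge_zero) auto
    moreover have "(sin \<theta>)^2 > 0" using sin2 Dpos dk_lt by simp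
    ultimately show ?thesis by (metis less_eq_real_def power_zero_numeral zero_less_power2)
  qed
  have g_eq: "g = (m - dk * dl) / D" unfolding g_def gamma_def D_def dk_def dl_def sm_def m_def ..
  have g1: "(cos \<theta>)^2 * dk + (sin \<theta>)^2 * sm = g"
    unfolding g_eq cos2 sin2 using Dpos sm2 by (simp add: field_simps power2_eq_square)
  have g2: "(sin \<theta>)^2 * dl + (cos \<theta>)^2 * sm = g"
    unfolding g_eq cos2 sin2 using Dpos sm2 by (simp add: field_simps power2_eq_square)
  have apos: "a > 0" unfolding a_eq using cpos smpos skpos by simp
  have bpos: "b > 0" unfolding b_eq using spos smpos slpos by simp
  have GLL: "\<And>p q. G $ Inl p $ Inl q = a^2 * (column p V \<bullet> column q V)"
    unfolding G_def gram_LL a_def m_def k_def ..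
  have GLR: "\<And>p q. G $ Inl p $ Inr q = a * b * (column p V \<bullet> column q W)"
    unfolding G_def gram_LR a_def b_def m_def k_def l_def ..
  have GRL: "\<And>p q. G $ Inr q $ Inl p = a * b * (column p V \<bullet> column q W)"
    unfolding G_def gram_RL a_def b_def m_def k_def l_def ..
  have GRR: "\<And>p q. G $ Inr p $ Inr q = b^2 * (column p W \<bullet> column q W)"
    unfolding G_def gram_RR b_def m_def l_def ..
  have tL: "\<And>p. t $ Inl p = cos \<theta> / sk" unfolding t_def t_Inl sk_def k_def ..
  have tR: "\<And>p. t $ Inr p = sin \<theta> / sl" unfolding t_def t_Inr sl_def l_def ..
  have UL: "\<And>i p. U_theta \<theta> V W $ i $ Inl p = a * V $ i $ p" unfolding U_Inl a_def m_def k_def ..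
  have UR: "\<And>i p. U_theta \<theta> V W $ i $ Inr p = b * W $ i $ p" unfolding U_Inr b_def m_def l_def ..
  have kk: "k = sk^2" using sk2 by simp
  have ll: "l = sl^2" using sl2 by simp
  have mm: "m = sm^2" using sm2 by simp
  have card_l: "(\<Sum>q\<in>(UNIV::'l set). 1 / sm) = l / sm" unfolding l_def by simp
  have card_k: "(\<Sum>q\<in>(UNIV::'k set). 1 / sm) = k / sm" unfolding k_def by simp
  have mm_entry: "\<And>A B x y. (A ** B) $ x $ y = (\<Sum>j\<in>UNIV. A$x$j * B$j$y)"
    by (simp add: matrix_matrix_mult_def)
  have P1: "mat_abs G *v t = g *\<^sub>R t"
  proof (rule vec_eqI)
    fix x
    have "(mat_abs G *v t) $ x = (\<Sum>y\<in>UNIV. \<bar>G$x$y\<bar> * t$y)"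
      by (simp add: matrix_vector_mult_def mat_abs_def)
    also have "\<dots> = (\<Sum>p\<in>UNIV. \<bar>G$x$Inl p\<bar> * t$Inl p) + (\<Sum>q\<in>UNIV. \<bar>G$x$Inr q\<bar> * t$Inr q)"
      by (rule sum_UNIV_Plus)
    also have "\<dots> = g * t$x"
    proof (cases x)
      case (Inl p)
      have s1: "(\<Sum>q\<in>UNIV. \<bar>G$x$Inl q\<bar> * t$Inl q) = a^2 * (cos \<theta> / sk) * (k / m * dk)"
        unfolding Inl GLL tL sum_abs_factor absV by simp
      have s2: "(\<Sum>q\<in>UNIV. \<bar>G$x$Inr q\<bar> * t$Inr q) = a * b * (sin \<theta> / sl) * (l / sm)"
        unfolding Inl GLR tR sum_abs_factor mub card_l using apos bpos by simp
      have "a^2 * (cos \<theta> / sk) * (k / m * dk) + a * b * (sin \<theta> / sl) * (l / sm)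
          = (cos \<theta> / sk) * ((cos \<theta>)^2 * dk + (sin \<theta>)^2 * sm)"
        unfolding a_eq b_eq kk ll mm using skpos slpos smpos by (simp add: field_simps power2_eq_square)
      then have "a^2 * (cos \<theta> / sk) * (k / m * dk) + a * b * (sin \<theta> / sl) * (l / sm) = g * t $ x" unfolding g1 Inl tL by simp
      then show ?thesis unfolding s1 s2 .
    next
      case (Inr q)
      have s1: "(\<Sum>p\<in>UNIV. \<bar>G$x$Inl p\<bar> * t$Inl p) = a * b * (cos \<theta> / sk) * (k / sm)"
        unfolding Inr GRL tL sum_abs_factor mub card_k using apos bpos by simp
      have s2: "(\<Sum>p\<in>UNIV. \<bar>G$x$Inr p\<bar> * t$Inr p) = b^2 * (sin \<theta> / sl) * (l / m * dl)"
        unfolding Inr GRR tR sum_abs_factor absW by simp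
      have "a * b * (cos \<theta> / sk) * (k / sm) + b^2 * (sin \<theta> / sl) * (l / m * dl)
          = (sin \<theta> / sl) * ((sin \<theta>)^2 * dl + (cos \<theta>)^2 * sm)"
        unfolding a_eq b_eq kk ll mm using skpos slpos smpos by (simp add: field_simps power2_eq_square)
      then have "a * b * (cos \<theta> / sk) * (k / sm) + b^2 * (sin \<theta> / sl) * (l / m * dl) = g * t $ x" unfolding g2 Inr tR by simp
      then show ?thesis unfolding s1 s2 .
    qed
    finally show "(mat_abs G *v t) $ x = (g *\<^sub>R t) $ x" by simp
  qed
  have P2: "diag_mat t ** mat_sgn G ** diag_mat t ** transpose (U_theta \<theta> V W) = (g / m) *\<^sub>R transpose (U_theta \<theta> V W)"
  proof (rule vec_eqI, rule vec_eqI)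
    fix x i
    have "(diag_mat t ** mat_sgn G ** diag_mat t ** transpose (U_theta \<theta> V W)) $ x $ i
        = (\<Sum>y\<in>UNIV. t$x * sgn (G$x$y) * t$y * U_theta \<theta> V W $ i $ y)"
      by (subst mm_entry) (simp add: diag_left diag_right mat_sgn_def transpose_def)
    also have "\<dots> = (\<Sum>p\<in>UNIV. t$x * sgn (G$x$Inl p) * t$Inl p * U_theta \<theta> V W $ i $ Inl p)
        + (\<Sum>q\<in>UNIV. t$x * sgn (G$x$Inr q) * t$Inr q * U_theta \<theta> V W $ i $ Inr q)"
      by (rule sum_UNIV_Plus)
    also have "\<dots> = g / m * U_theta \<theta> V W $ i $ x"
    proof (cases x)
      case (Inl p)
      have a2: "a^2 > 0" using apos by simp
      have ab: "a * b > 0" using apos bpos by simp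
      have s1: "(\<Sum>q\<in>UNIV. t$x * sgn (G$x$Inl q) * t$Inl q * U_theta \<theta> V W $ i $ Inl q)
          = t$x * (cos \<theta> / sk) * a * (k / m * dk * V $ i $ p)"
        unfolding Inl GLL tL UL sum_sgn_factor[OF a2] sgnV ..
      have s2: "(\<Sum>q\<in>UNIV. t$x * sgn (G$x$Inr q) * t$Inr q * U_theta \<theta> V W $ i $ Inr q)
          = t$x * (sin \<theta> / sl) * b * (sm * (l / m) * V $ i $ p)"
        unfolding Inl GLR tR UR sum_sgn_factor[OF ab] crossW ..
      have "(cos \<theta> / sk) * (cos \<theta> / sk) * a * (k / m * dk * V $ i $ p) + (cos \<theta> / sk) * (sin \<theta> / sl) * b * (sm * (l / m) * V $ i $ p)
          = ((cos \<theta>)^2 * dk + (sin \<theta>)^2 * sm) / m * (a * V $ i $ p)"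
        unfolding a_eq b_eq kk ll mm using skpos slpos smpos by (simp add: field_simps power2_eq_square)
      then have "t$x * (cos \<theta> / sk) * a * (k / m * dk * V $ i $ p) + t$x * (sin \<theta> / sl) * b * (sm * (l / m) * V $ i $ p) = g / m * U_theta \<theta> V W $ i $ x" unfolding g1 Inl tL UL by simp
      then show ?thesis unfolding s1 s2 .
    next
      case (Inr q)
      have b2: "b^2 > 0" using bpos by simp
      have ab: "a * b > 0" using apos bpos by simp
      have s1: "(\<Sum>p\<in>UNIV. t$x * sgn (G$x$Inl p) * t$Inl p * U_theta \<theta> V W $ i $ Inl p)
          = t$x * (cos \<theta> / sk) * a * (sm * (k / m) * W $ i $ q)"
        unfolding Inr GRL tL UL sum_sgn_factor[OF ab] crossV ..
      have s2: "(\<Sum>p\<in>UNIV. t$x * sgn (G$x$Inr p) * t$Inr p * U_theta \<theta> V W $ i $ Inr p)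
          = t$x * (sin \<theta> / sl) * b * (l / m * dl * W $ i $ q)"
        unfolding Inr GRR tR UR sum_sgn_factor[OF b2] sgnW ..
      have "(sin \<theta> / sl) * (cos \<theta> / sk) * a * (sm * (k / m) * W $ i $ q) + (sin \<theta> / sl) * (sin \<theta> / sl) * b * (l / m * dl * W $ i $ q)
          = ((sin \<theta>)^2 * dl + (cos \<theta>)^2 * sm) / m * (b * W $ i $ q)"
        unfolding a_eq b_eq kk ll mm using skpos slpos smpos by (simp add: field_simps power2_eq_square)
      then have "t$x * (cos \<theta> / sk) * a * (sm * (k / m) * W $ i $ q) + t$x * (sin \<theta> / sl) * b * (l / m * dl * W $ i $ q) = g / m * U_theta \<theta> V W $ i $ x" unfolding g2 Inr tR UR by simp
      then show ?thesis unfolding s1 s2 .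
    qed
    finally show "(diag_mat t ** mat_sgn G ** diag_mat t ** transpose (U_theta \<theta> V W)) $ x $ i
        = ((g / m) *\<^sub>R transpose (U_theta \<theta> V W)) $ x $ i" by (simp add: transpose_def)
  qed
  show ?thesis using P1 P2 unfolding G_def t_def g_def m_def by simp
qed

end
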